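(* Let $\delta>0$ and $n\in\mathbb N$ with $n\delta=1$. For every $u\in U^n_\#(\delta\mathbb Z)$, \[ |u|_{H^{-1}}\le\frac1{2\sqrt3}\|u\|_{L^2}. \]
   Context: For $\delta>0$, $n\in\mathbb N$, set $X_i=\delta i$. $U^n_\#(\delta\mathbb Z)$ is the space of functions $u:\delta\mathbb Z\to\mathbb R$ with $u(X_{i+n})=u(X_i)$ for all $i$ and $\frac1n\sum_{i=1}^nu(X_i)=0$. $\langle u,v\rangle=\frac1n\sum_{i=1}^nu(X_i)v(X_i)$, $\|u\|_{L^2}=\langle u,u\rangle^{1/2}$, $Du(X_i)=(u(X_{i+1})-u(X_i))/\delta$, $|u|_{H^1}=\|Du\|_{L^2}$, $|u|_{H^{-1}}=\sup\{\langle u,w\rangle/|w|_{H^1}:0\ne w\in U^n_\#(\delta\mathbb Z)\}$. *)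

theory Defs
  imports Complex_Main
begin

text \<open>Grid functions u on delta*Z are represented by their values at the
grid points X_i = delta*i, i.e. as functions int => real (u i = u(X_i)).\<close>

definition Uper :: "nat \<Rightarrow> (int \<Rightarrow> real) set" where
  "Uper n = {u. (\<forall>i. u (i + int n) = u i) \<and> (1 / real n) * (\<Sum>i=1..int n. u i) = 0}"

definition ip :: "nat \<Rightarrow> (int \<Rightarrow> real) \<Rightarrow> (int \<Rightarrow> real) \<Rightarrow> real" where
  "ip n u v = (1 / real n) * (\<Sum>i=1..int n. u i * v i)"

definition L2norm :: "nat \<Rightarrow> (int \<Rightarrow> real) \<Rightarrow> real" where
  "L2norm n u = sqrt (ip n u u)"

definition Dgrid :: "real \<Rightarrow> (int \<Rightarrow> real) \<Rightarrow> int \<Rightarrow> real" where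
  "Dgrid \<delta> u i = (u (i + 1) - u i) / \<delta>"

definition H1semi :: "real \<Rightarrow> nat \<Rightarrow> (int \<Rightarrow> real) \<Rightarrow> real" where
  "H1semi \<delta> n u = L2norm n (Dgrid \<delta> u)"

text \<open>The supremum is taken over the set of quotients together with 0; for
n >= 2 this does not change the value (the quotient set is symmetric under
w -> -w, hence contains a nonnegative element); for n = 1 the set of nonzero w
is empty and the convention sup of the empty set = 0 is used.\<close>
definition Hm1semi :: "real \<Rightarrow> nat \<Rightarrow> (int \<Rightarrow> real) \<Rightarrow> real" where
  "Hm1semi \<delta> n u = Sup (insert 0 {ip n u w / H1semi \<delta> n w | w. w \<in> Uper n \<and> w \<noteq> (\<lambda>_. 0)})"

end

theory Submission imports Defs "HOL-Analysis.Convex" begin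

lemma sum_int_step:
  fixes f :: "int \<Rightarrow> 'a::comm_monoid_add"
  assumes "m \<ge> 0"
  shows "(\<Sum>i=1..m+1. f i) = (\<Sum>i=1..m. f i) + f (m+1)"
proof -
  have "{1..m+1} = insert (m+1) {1..m}" using assms by auto
  then show ?thesis using assms by (simp add: add.commute)
qed

lemma tele:
  fixes w :: "int \<Rightarrow> real"
  assumes "m \<ge> 0"
  shows "(\<Sum>k=1..m. w (k+1) - w k) = w (m+1) - w 1"
  using assms
proof (induction m rule: int_ge_induct)
  case base then show ?case by simp
next
  case (step i) show ?case unfolding sum_int_step[OF step.hyps(1)] using step.IH by (simp add: )
qed

lemma wsum:
  fixes w :: "int \<Rightarrow> real"
  assumes "m \<ge> 0"
  shows "(\<Sum>k=1..m. of_int k * (w (k+1) - w k)) = of_int m * w (m+1) - (\<Sum>k=1..m. w k)"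
  using assms
proof (induction m rule: int_ge_induct)
  case base then show ?case by simp
next
  case (step i) show ?case unfolding sum_int_step[OF step.hyps(1)] using step.IH by (simp add:  algebra_simps)
qed

lemma sumk:
  assumes "m \<ge> 0"
  shows "(\<Sum>k=1..m. (of_int k::real)) = of_int m * (of_int m + 1) / 2"
  using assms
proof (induction m rule: int_ge_induct)
  case base then show ?case by simp
next
  case (step i) show ?case unfolding sum_int_step[OF step.hyps(1)] using step.IH by (simp add:  field_simps)
qed

lemma sumk2:
  assumes "m \<ge> 0"
  shows "(\<Sum>k=1..m. (of_int k::real)^2) = of_int m * (of_int m + 1) * (2 * of_int m + 1) / 6"
  using assms
proof (induction m rule: int_ge_induct)
  case base then show ?case by simp
next
  case (step i) show ?case unfolding sum_int_step[OF step.hyps(1)] using step.IH by (simp add:  field_simps power2_eq_square)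
qed

lemma sumc:
  assumes "m \<ge> 0"
  shows "(\<Sum>k=1..m. (of_int k - (of_int m + 1)/2::real)^2) = (of_int m ^3 - of_int m) / 12"
proof -
  define c :: real where "c = (of_int m + 1)/2"
  have "(\<Sum>k=1..m. (of_int k - c)^2) = (\<Sum>k=1..m. (of_int k::real)^2 - (2*c) * of_int k + c^2)"
    by (rule sum.cong) (auto simp: power2_diff)
  also have "\<dots> = (\<Sum>k=1..m. (of_int k::real)^2) - (2*c)*(\<Sum>k=1..m. of_int k) + of_int m * c^2"
    using assms by (simp add: sum.distrib sum_subtractf sum_distrib_left)
  also have "\<dots> = (of_int m ^3 - of_int m) / 12"
    using assms sumk[OF assms] sumk2[OF assms] by (simp add: c_def field_simps power2_eq_square power3_eq_cube)
  finally show ?thesis by (simp add: c_def)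
qed

lemma per_shift1:
  fixes f :: "int \<Rightarrow> real"
  assumes "\<forall>i. f (i + int n) = f i"
  shows "(\<Sum>i=1..int n. f (i+1)) = (\<Sum>i=1..int n. f i)"
proof -
  have "(\<Sum>i=1..int n. f (i+1) - f i) = f (int n + 1) - f 1" by (rule tele) simp
  also have "\<dots> = 0" using assms by (metis add.commute diff_self)
  finally show ?thesis by (simp add: sum_subtractf)
qed

lemma per_shift_nat:
  fixes f :: "int \<Rightarrow> real"
  assumes "\<forall>i. f (i + int n) = f i"
  shows "(\<Sum>i=1..int n. f (i + int s)) = (\<Sum>i=1..int n. f i)"
proof (induction s)
  case 0 then show ?case by simp
next
  case (Suc s)
  have p: "\<forall>i. f (i + int s + int n) = f (i + int s)" using assms by (metis add.commute add.left_commute)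
  have "(\<Sum>i=1..int n. f (i + int (Suc s))) = (\<Sum>i=1..int n. (\<lambda>j. f (j + int s)) (i+1))"
    by (simp add: algebra_simps)
  also have "\<dots> = (\<Sum>i=1..int n. f (i + int s))"
    by (rule per_shift1) (use p in \<open>simp add: algebra_simps\<close>)
  finally show ?case using Suc by simp
qed

lemma per_shift:
  fixes f :: "int \<Rightarrow> real"
  assumes "\<forall>i. f (i + int n) = f i"
  shows "(\<Sum>i=1..int n. f (i + s)) = (\<Sum>i=1..int n. f i)"
proof (cases "s \<ge> 0")
  case True
  then show ?thesis using per_shift_nat[OF assms, of "nat s"] by simp
next
  case False
  define g where "g = (\<lambda>i. f (i + s))"
  have p: "\<forall>i. g (i + int n) = g i" using assms unfolding g_def by (metis add.commute add.left_commute)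
  have "(\<Sum>i=1..int n. g (i + int (nat (-s)))) = (\<Sum>i=1..int n. g i)"
    by (rule per_shift_nat[OF p])
  moreover have "\<And>i. g (i + int (nat (-s))) = f i" using False unfolding g_def by simp
  ultimately show ?thesis unfolding g_def by simp
qed

lemma point1:
  fixes w :: "int \<Rightarrow> real"
  assumes per: "\<forall>i. w (i + int n) = w i" and mz: "(\<Sum>i=1..int n. w i) = 0" and n: "n \<ge> 1"
  shows "(w 1)^2 \<le> real n / 12 * (\<Sum>k=1..int n. (w (k+1) - w k)^2)"
proof -
  define c :: real where "c = (real n + 1) / 2"
  define D where "D = (\<Sum>k=1..int n. (w (k+1) - w k)^2)"
  have D0: "D \<ge> 0" unfolding D_def by (rule sum_nonneg) simp
  have w1: "w (int n + 1) = w 1" using per by (metis add.commute)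
  have t: "(\<Sum>k=1..int n. w (k+1) - w k) = 0" using tele[of "int n" w] w1 by simp
  have "real n * w 1 = (\<Sum>k=1..int n. of_int k * (w (k+1) - w k))"
    using wsum[of "int n" w] w1 mz by simp
  also have "\<dots> = (\<Sum>k=1..int n. of_int k * (w (k+1) - w k)) - c * (\<Sum>k=1..int n. w (k+1) - w k)"
    using t by simp
  also have "\<dots> = (\<Sum>k=1..int n. (of_int k - c) * (w (k+1) - w k))"
    unfolding sum_distrib_left sum_subtractf[symmetric] by (rule sum.cong) (auto simp: algebra_simps)
  finally have e: "real n * w 1 = (\<Sum>k=1..int n. (of_int k - c) * (w (k+1) - w k))" .
  have "(real n * w 1)^2 \<le> (\<Sum>k=1..int n. (of_int k - c)^2) * D"
    unfolding e D_def by (rule Cauchy_Schwarz_ineq_sum)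
  also have "(\<Sum>k=1..int n. (of_int k - c)^2) = (real n ^3 - real n) / 12"
    using sumc[of "int n"] unfolding c_def by simp
  finally have a: "real n^2 * (w 1)^2 \<le> (real n ^3 - real n) / 12 * D" by (simp add: power_mult_distrib)
  have "(real n ^3 - real n) / 12 * D \<le> real n^2 * (real n / 12 * D)"
    using D0 n by (simp add: power2_eq_square power3_eq_cube field_simps mult_right_mono)
  with a have "real n^2 * (w 1)^2 \<le> real n^2 * (real n / 12 * D)" by linarith
  then have "(w 1)^2 \<le> real n / 12 * D" using n by (simp add: mult_le_cancel_left)
  then show ?thesis unfolding D_def .
qed

lemma poinc_sum:
  fixes w :: "int \<Rightarrow> real"
  assumes per: "\<forall>i. w (i + int n) = w i" and mz: "(\<Sum>i=1..int n. w i) = 0" and n: "n \<ge> 1"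
  shows "(\<Sum>j=1..int n. (w j)^2) \<le> real n ^2 / 12 * (\<Sum>k=1..int n. (w (k+1) - w k)^2)"
proof -
  define D where "D = (\<Sum>k=1..int n. (w (k+1) - w k)^2)"
  have "(w j)^2 \<le> real n / 12 * D" for j
  proof -
    define v where "v = (\<lambda>i. w (i + (j - 1)))"
    have pv: "\<forall>i. v (i + int n) = v i" using per unfolding v_def by (metis add.commute add.left_commute)
    have mv: "(\<Sum>i=1..int n. v i) = 0" unfolding v_def using per_shift[OF per, of "j-1"] mz by simp
    have ph: "\<forall>i. (\<lambda>k. (w (k+1) - w k)^2) (i + int n) = (\<lambda>k. (w (k+1) - w k)^2) i"
      using per by (metis add.commute add.left_commute)
    have "(\<Sum>k=1..int n. (v (k+1) - v k)^2) = (\<Sum>k=1..int n. (\<lambda>k. (w (k+1) - w k)^2) (k + (j-1)))"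
      unfolding v_def by (simp add: algebra_simps)
    also have "\<dots> = D" unfolding D_def by (rule per_shift[OF ph])
    finally have Dv: "(\<Sum>k=1..int n. (v (k+1) - v k)^2) = D" .
    have "(v 1)^2 \<le> real n / 12 * D" using point1[OF pv mv n] Dv by simp
    then show ?thesis unfolding v_def by simp
  qed
  then have "(\<Sum>j=1..int n. (w j)^2) \<le> of_nat (card {1..int n}) * (real n / 12 * D)"
    by (intro sum_bounded_above) auto
  also have "\<dots> = real n^2 / 12 * D" by (simp add: power2_eq_square)
  finally show ?thesis unfolding D_def .
qed

lemma cs_ip:
  fixes u w :: "int \<Rightarrow> real"
  shows "ip n u w \<le> L2norm n u * L2norm n w"
proof -
  let ?A = "\<Sum>i=1..int n. u i * u i" and ?B = "\<Sum>i=1..int n. w i * w i" and ?C = "\<Sum>i=1..int n. u i * w i"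
  have A0: "?A \<ge> 0" and B0: "?B \<ge> 0" by (auto intro: sum_nonneg)
  have "?C^2 \<le> ?A * ?B" using Cauchy_Schwarz_ineq_sum[of u w "{1..int n}"] by (simp add: power2_eq_square)
  then have "?C \<le> sqrt (?A * ?B)" by (metis abs_le_D1 real_le_rsqrt real_sqrt_abs real_sqrt_le_mono)
  then have "(1/real n) * ?C \<le> (1/real n) * sqrt (?A * ?B)" by (simp add: divide_right_mono)
  also have "\<dots> = sqrt ((1/real n) * ?A) * sqrt ((1/real n) * ?B)"
    by (simp add: real_sqrt_mult real_sqrt_divide)
  finally show ?thesis unfolding ip_def L2norm_def .
qed

lemma poinc:
  fixes \<delta> :: real and n :: nat and w :: "int \<Rightarrow> real"
  assumes "\<delta> > 0" and nd: "real n * \<delta> = 1" and "w \<in> Uper n"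
  shows "L2norm n w \<le> 1 / (2 * sqrt 3) * H1semi \<delta> n w"
proof -
  have n: "n \<ge> 1" using nd by (cases n) auto
  have per: "\<forall>i. w (i + int n) = w i" and mz: "(\<Sum>i=1..int n. w i) = 0"
    using assms(3) n unfolding Uper_def by auto
  define D where "D = (\<Sum>k=1..int n. (w (k+1) - w k)^2)"
  have P: "(\<Sum>j=1..int n. (w j)^2) \<le> real n ^2 / 12 * D" using poinc_sum[OF per mz n] unfolding D_def .
  have dl: "\<delta> = 1 / real n" using nd n by (simp add: field_simps)
  have H: "ip n (Dgrid \<delta> w) (Dgrid \<delta> w) = real n * D"
  proof -
    have e: "(\<lambda>i. Dgrid \<delta> w i * Dgrid \<delta> w i) = (\<lambda>i. real n^2 * (w (i+1) - w i)^2)"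
      using n by (auto simp: Dgrid_def dl power2_eq_square)
    have "ip n (Dgrid \<delta> w) (Dgrid \<delta> w) = 1 / real n * (real n^2 * D)"
      unfolding ip_def e D_def by (simp add: sum_distrib_left)
    then show ?thesis using n by (simp add: power2_eq_square)
  qed
  have "ip n w w \<le> 1/12 * (real n * D)"
    unfolding ip_def using P n by (simp add: power2_eq_square field_simps)
  then have "sqrt (ip n w w) \<le> sqrt (1/12) * sqrt (real n * D)"
    by (metis real_sqrt_le_mono real_sqrt_mult)
  moreover have "sqrt (1/12) = 1 / (2 * sqrt 3)"
  proof -
    have "sqrt (12::real) = 2 * sqrt 3" using real_sqrt_mult[of 4 3] by simp
    then show ?thesis by (simp add: real_sqrt_divide)
  qed
  ultimately show ?thesis unfolding H1semi_def L2norm_def H by simp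
qed

theorem lemma9p6:
  fixes \<delta> :: real and n :: nat and u :: "int \<Rightarrow> real"
  assumes "\<delta> > 0" and "real n * \<delta> = 1" and "u \<in> Uper n"
  shows "Hm1semi \<delta> n u \<le> 1 / (2 * sqrt 3) * L2norm n u"
proof -
  let ?C = "1 / (2 * sqrt 3) :: real"
  have L0: "L2norm n u \<ge> 0" unfolding L2norm_def ip_def by (simp add: sum_nonneg)
  have C0: "?C \<ge> 0" by simp
  have R0: "0 \<le> ?C * L2norm n u" using L0 C0 by simp
  show ?thesis unfolding Hm1semi_def
  proof (rule cSup_least)
    fix x assume "x \<in> insert 0 {ip n u w / H1semi \<delta> n w | w. w \<in> Uper n \<and> w \<noteq> (\<lambda>_. 0)}"
    then consider "x = 0" | w where "x = ip n u w / H1semi \<delta> n w" "w \<in> Uper n" by blast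
    then show "x \<le> ?C * L2norm n u"
    proof cases
      case 1 then show ?thesis using R0 by simp
    next
      case 2
      have H0: "H1semi \<delta> n w \<ge> 0" unfolding H1semi_def L2norm_def ip_def by (simp add: sum_nonneg)
      show ?thesis
      proof (cases "H1semi \<delta> n w = 0")
        case True then show ?thesis using 2 R0 by simp
      next
        case False
        with H0 have Hp: "H1semi \<delta> n w > 0" by simp
        have "ip n u w \<le> L2norm n u * L2norm n w" by (rule cs_ip)
        also have "\<dots> \<le> L2norm n u * (?C * H1semi \<delta> n w)"
          using poinc[OF assms(1,2) 2(2)] L0 by (rule mult_left_mono)
        finally have "ip n u w \<le> ?C * L2norm n u * H1semi \<delta> n w" by (simp add: algebra_simps)
        then show ?thesis using 2 Hp by (simp add: pos_divide_le_eq)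
      qed
    qed
  qed simp
qed

end
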